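(* Let $f\in\mathcal F^{\,r}_{op}$ and $k\ge1$. The following are equivalent: (i) $I^{SLD}_\rho(A)\le k\,I^f_\rho(A)$ for every $n$, every faithful $\rho\in\mathcal D^1_n$ and every self-adjoint $A\in M_n(\mathbb C)$; (ii) $m_{\tilde f}(x,y)\le\big(1-\frac1k\big)\frac{x+y}{2}+\frac1k\cdot\frac{2xy}{x+y}$ for all $x,y>0$; (iii) $f(x)\le 2kf(0)\cdot\frac{1+x}{2}$ for all $x>0$.
   Context: $\mathcal F_{op}$ is the class of functions $f:(0,\infty)\to(0,\infty)$ that are operator monotone, satisfy $f(1)=1$ and $tf(t^{-1})=f(t)$ for all $t>0$. $f(0):=\lim_{x\to0^+}f(x)$, and $\mathcal F^{\,r}_{op}=\{f\in\mathcal F_{op}: f(0)\neq0\}$. For $f\in\mathcal F^{\,r}_{op}$ and $x>0$, $\tilde f(x):=\frac12\big[(x+1)-(x-1)^2\frac{f(0)}{f(x)}\big]$ (this $\tilde f$ again belongs to $\mathcal F_{op}$). For any $g\in\mathcal F_{op}$ and $x,y>0$, $m_g(x,y)=xg(y/x)$. $\mathcal D_n^1$ is the set of strictly positive $n\times n$ density matrices. $L_\rho(X)=\rho X$, $R_\rho(X)=X\rho$, and $m_f(L_\rho,R_\rho)$ multiplies the entry $X_{ij}$ of $X$ (in an orthonormal eigenbasis of $\rho$ with eigenvalues $\lambda_i$) by $m_f(\lambda_i,\lambda_j)$. $\|X\|^2_{\rho,f}=\mathrm{Tr}\big(X^* m_f(L_\rho,R_\rho)^{-1}(X)\big)$. The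 $f$-information is $I^f_\rho(A)=\frac{f(0)}{2}\|i[\rho,A]\|^2_{\rho,f}$, and $I^{SLD}_\rho:=I^{f_{SLD}}_\rho$ with $f_{SLD}(x)=\frac{1+x}{2}$ (equivalently $\frac14\mathrm{Tr}(\rho L^2)$, $L=2(L_\rho+R_\rho)^{-1}(i[\rho,A])$). *)

theory Defs
  imports "HOL-Analysis.Analysis" "Jordan_Normal_Form.Matrix"
begin

definition cadj :: "complex mat \<Rightarrow> complex mat" where
  "cadj A = mat (dim_col A) (dim_row A) (\<lambda>(i,j). cnj (A $$ (j,i)))"

definition mtrace :: "complex mat \<Rightarrow> complex" where
  "mtrace A = (\<Sum>i<dim_row A. A $$ (i,i))"

definition hermitian_mat :: "complex mat \<Rightarrow> bool" where
  "hermitian_mat A \<longleftrightarrow> dim_row A = dim_col A \<and> cadj A = A"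

definition unitary_mat :: "nat \<Rightarrow> complex mat \<Rightarrow> bool" where
  "unitary_mat n U \<longleftrightarrow> U \<in> carrier_mat n n \<and> cadj U * U = 1\<^sub>m n"

definition qform :: "complex mat \<Rightarrow> complex vec \<Rightarrow> complex" where
  "qform A v = (\<Sum>i<dim_row A. cnj (v $ i) * (A *\<^sub>v v) $ i)"

definition psd_mat :: "complex mat \<Rightarrow> bool" where
  "psd_mat A \<longleftrightarrow> hermitian_mat A \<and>
     (\<forall>v \<in> carrier_vec (dim_row A). 0 \<le> Re (qform A v))"

definition pd_mat :: "complex mat \<Rightarrow> bool" where
  "pd_mat A \<longleftrightarrow> hermitian_mat A \<and>
     (\<forall>v \<in> carrier_vec (dim_row A). v \<noteq> 0\<^sub>v (dim_row A) \<longrightarrow> 0 < Re (qform A v))"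

definition eig_decomp :: "complex mat \<Rightarrow> complex mat \<times> (nat \<Rightarrow> real)" where
  "eig_decomp A = (SOME (U, d). unitary_mat (dim_row A) U \<and>
      A = U * mat_diag (dim_row A) (\<lambda>i. complex_of_real (d i)) * cadj U)"

definition mat_fun :: "(real \<Rightarrow> real) \<Rightarrow> complex mat \<Rightarrow> complex mat" where
  "mat_fun f A = (case eig_decomp A of (U, d) \<Rightarrow>
      U * mat_diag (dim_row A) (\<lambda>i. complex_of_real (f (d i))) * cadj U)"

definition operator_monotone :: "(real \<Rightarrow> real) \<Rightarrow> bool" where
  "operator_monotone f \<longleftrightarrow>
     (\<forall>n A B. A \<in> carrier_mat n n \<longrightarrow> B \<in> carrier_mat n n \<longrightarrow> pd_mat A \<longrightarrow> pd_mat B \<longrightarrow>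
        psd_mat (B - A) \<longrightarrow> psd_mat (mat_fun f B - mat_fun f A))"

definition Fop :: "(real \<Rightarrow> real) \<Rightarrow> bool" where
  "Fop f \<longleftrightarrow> (\<forall>x>0. f x > 0) \<and> operator_monotone f \<and> f 1 = 1 \<and>
              (\<forall>t>0. t * f (1 / t) = f t)"

definition fzero :: "(real \<Rightarrow> real) \<Rightarrow> real" where
  "fzero f = Lim (at_right 0) f"

definition Fop_r :: "(real \<Rightarrow> real) \<Rightarrow> bool" where
  "Fop_r f \<longleftrightarrow> Fop f \<and> fzero f \<noteq> 0"

definition ftilde :: "(real \<Rightarrow> real) \<Rightarrow> real \<Rightarrow> real" where
  "ftilde f x = ((x + 1) - (x - 1)^2 * fzero f / f x) / 2"

definition mean_f :: "(real \<Rightarrow> real) \<Rightarrow> real \<Rightarrow> real \<Rightarrow> real" where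
  "mean_f g x y = x * g (y / x)"

definition f_SLD :: "real \<Rightarrow> real" where
  "f_SLD x = (1 + x) / 2"

definition faithful_density :: "nat \<Rightarrow> complex mat \<Rightarrow> bool" where
  "faithful_density n \<rho> \<longleftrightarrow> \<rho> \<in> carrier_mat n n \<and> pd_mat \<rho> \<and> mtrace \<rho> = 1"

text \<open>m_g(L_rho,R_rho)^{-1}(X): in an eigenbasis of rho, divide entry X_ij by m_g(lambda_i,lambda_j).\<close>
definition mean_superop_inv :: "(real \<Rightarrow> real) \<Rightarrow> complex mat \<Rightarrow> complex mat \<Rightarrow> complex mat" where
  "mean_superop_inv g \<rho> X = (case eig_decomp \<rho> of (U, d) \<Rightarrow>
      (let n = dim_row \<rho>; Y = cadj U * X * U in
        U * mat n n (\<lambda>(i,j). Y $$ (i,j) / complex_of_real (mean_f g (d i) (d j))) * cadj U))"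

definition norm_sq :: "(real \<Rightarrow> real) \<Rightarrow> complex mat \<Rightarrow> complex mat \<Rightarrow> real" where
  "norm_sq g \<rho> X = Re (mtrace (cadj X * mean_superop_inv g \<rho> X))"

definition f_info :: "(real \<Rightarrow> real) \<Rightarrow> complex mat \<Rightarrow> complex mat \<Rightarrow> real" where
  "f_info g \<rho> A = fzero g / 2 * norm_sq g \<rho> (\<i> \<cdot>\<^sub>m (\<rho> * A - A * \<rho>))"

definition SLD_info :: "complex mat \<Rightarrow> complex mat \<Rightarrow> real" where
  "SLD_info \<rho> A = f_info f_SLD \<rho> A"

end

theory Submission
  imports Defs "Jordan_Normal_Form.Schur_Decomposition" "Jordan_Normal_Form.Spectral_Radius" "Jordan_Normal_Form.Determinant"
begin


lemma cadj_carrier[simp]: "dim_row (cadj A) = dim_col A" "dim_col (cadj A) = dim_row A"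
  by (auto simp: cadj_def)

lemma cadj_carrier_mat: "A \<in> carrier_mat n m \<Longrightarrow> cadj A \<in> carrier_mat m n"
  by (auto simp: cadj_def)

lemma cadj_index[simp]: "i < dim_col A \<Longrightarrow> j < dim_row A \<Longrightarrow> cadj A $$ (i,j) = cnj (A $$ (j,i))"
  by (auto simp: cadj_def)

lemma cadj_cadj[simp]: "cadj (cadj A) = A"
  by (rule eq_matI, auto)

lemma cadj_mult: assumes "A \<in> carrier_mat n m" "B \<in> carrier_mat m p"
  shows "cadj (A * B) = cadj B * cadj A"
  using assms by (intro eq_matI, auto simp: scalar_prod_def ac_simps)

lemma cadj_minus: assumes "A \<in> carrier_mat n m" "B \<in> carrier_mat n m"
  shows "cadj (A - B) = cadj A - cadj B"
  using assms by (intro eq_matI, auto)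

lemma cadj_one[simp]: "cadj (1\<^sub>m n) = 1\<^sub>m n"
  by (intro eq_matI, auto)

lemma mtrace_comm: assumes "A \<in> carrier_mat n m" "B \<in> carrier_mat m n"
  shows "mtrace (A * B) = mtrace (B * A)"
proof -
  have "mtrace (A * B) = (\<Sum>i<n. \<Sum>k<m. A $$ (i,k) * B $$ (k,i))"
    using assms by (auto simp: mtrace_def scalar_prod_def atLeast0LessThan)
  also have "\<dots> = (\<Sum>k<m. \<Sum>i<n. B $$ (k,i) * A $$ (i,k))"
    by (subst sum.swap, simp add: ac_simps)
  also have "\<dots> = mtrace (B * A)"
    using assms by (auto simp: mtrace_def scalar_prod_def atLeast0LessThan)
  finally show ?thesis .
qed

lemma unitary_right: assumes "unitary_mat n U" shows "U * cadj U = 1\<^sub>m n"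
  using assms mat_mult_left_right_inverse[of "cadj U" n U]
  by (auto simp: unitary_mat_def cadj_carrier_mat)

lemma udu_index: assumes U: "U \<in> carrier_mat n n" and i: "i < n" and j: "j < n"
  shows "(U * mat_diag n dd * cadj U) $$ (i,j) = (\<Sum>k<n. U $$ (i,k) * dd k * cnj (U $$ (j,k)))"
proof -
  have "U * mat_diag n dd = mat n n (\<lambda>(i,j). U $$ (i,j) * dd j)"
    using mat_diag_mult_right[OF U] .
  thus ?thesis using U i j
    by (auto simp: scalar_prod_def atLeast0LessThan)
qed

lemma cadj_mult_index: assumes U: "U \<in> carrier_mat n m" and V: "V \<in> carrier_mat n p"
   and i: "i < m" and j: "j < p"
  shows "(cadj U * V) $$ (i,j) = (\<Sum>k<n. cnj (U $$ (k,i)) * V $$ (k,j))"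
  using assms by (auto simp: scalar_prod_def atLeast0LessThan)



lemma cscalar_sum: assumes "u \<in> carrier_vec n" "w \<in> carrier_vec n"
  shows "u \<bullet>c w = (\<Sum>k<n. u $ k * cnj (w $ k))"
  using assms by (auto simp: scalar_prod_def atLeast0LessThan)

lemma cscalar_self: assumes "w \<in> carrier_vec n"
  shows "w \<bullet>c w = complex_of_real (\<Sum>k<n. (cmod (w $ k))^2)"
proof -
  have "w \<bullet>c w = (\<Sum>k<n. complex_of_real ((cmod (w $ k))^2))"
    unfolding cscalar_sum[OF assms assms] by (rule sum.cong[OF refl], metis complex_norm_square)
  thus ?thesis by (simp only: of_real_sum)
qed

lemma eigvec_unitary:
  fixes A :: "complex mat"
  assumes A: "A \<in> carrier_mat n n" and n: "0 < n" and ev: "eigenvector A v e"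
  shows "\<exists>W. unitary_mat n W \<and> (\<forall>k<n. (A * W) $$ (k,0) = e * W $$ (k,0))"
proof -
  interpret cof_vec_space n "TYPE(complex)" .
  from ev A have v: "v \<in> carrier_vec n" and v0: "v \<noteq> 0\<^sub>v n" and Av: "A *\<^sub>v v = e \<cdot>\<^sub>v v"
    unfolding eigenvector_def by auto
  define b where "b = basis_completion v"
  from basis_completion[OF v v0, folded b_def]
  have dist_b: "distinct b" 
    and indep: "\<not> lin_dep (set b)" and bc: "set b \<subseteq> carrier_vec n" and hdb: "hd b = v" 
    and len_b: "length b = n" by auto
  from hdb len_b n obtain vs where bv: "b = v # vs" by (cases b, auto)
  define ws where "ws = gram_schmidt n b"
  from gram_schmidt_result[OF bc dist_b indep refl, folded ws_def]
  have ws: "set ws \<subseteq> carrier_vec n" "corthogonal ws" "length ws = n" 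
    by (auto simp: len_b)
  have hdws: "hd ws = v" unfolding ws_def bv using v by simp
  define s where "s = (\<lambda>i. \<Sum>k<n. (cmod (ws ! i $ k))^2)"
  have wsi: "ws ! i \<in> carrier_vec n" if "i < n" for i using ws that by auto
  have sne: "s i \<noteq> 0" if "i < n" for i
  proof -
    have "ws ! i \<bullet>c ws ! i \<noteq> 0" using ws(2) ws(3) that unfolding corthogonal_def by auto
    hence "complex_of_real (s i) \<noteq> 0" using cscalar_self[OF wsi[OF that]] unfolding s_def by metis
    thus ?thesis by simp
  qed
  have spos: "s i > 0" if "i < n" for i using sne[OF that] unfolding s_def
    by (metis (no_types, lifting) sum_nonneg zero_le_power2 less_eq_real_def)
  define c where "c = (\<lambda>i. 1 / sqrt (s i))"
  define W where "W = mat n n (\<lambda>(k,i). complex_of_real (c i) * (ws ! i $ k))"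
  have Wc: "W \<in> carrier_mat n n" unfolding W_def by auto
  have orth: "(\<Sum>k<n. cnj (ws ! i $ k) * (ws ! j $ k)) = (if i = j then complex_of_real (s i) else 0)"
    if "i < n" "j < n" for i j
  proof -
    have "(\<Sum>k<n. cnj (ws ! i $ k) * (ws ! j $ k)) = ws ! j \<bullet>c ws ! i"
      using cscalar_sum[OF wsi[OF that(2)] wsi[OF that(1)]] by (simp add: ac_simps)
    also have "\<dots> = (if i = j then complex_of_real (s i) else 0)"
    proof (cases "i = j")
      case True thus ?thesis using cscalar_self[OF wsi[OF that(1)]] unfolding s_def by simp
    next
      case False thus ?thesis using ws(2) ws(3) that unfolding corthogonal_def by auto
    qed
    finally show ?thesis .
  qed
  have unit: "cadj W * W = 1\<^sub>m n"
  proof (rule eq_matI)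
    fix i j assume i: "i < dim_row (1\<^sub>m n :: complex mat)" and j: "j < dim_col (1\<^sub>m n :: complex mat)"
    hence i: "i < n" and j: "j < n" by auto
    have "(cadj W * W) $$ (i,j) = (\<Sum>k<n. cnj (W $$ (k,i)) * W $$ (k,j))"
      using cadj_mult_index[OF Wc Wc i j] .
    also have "\<dots> = (\<Sum>k<n. complex_of_real (c i * c j) * (cnj (ws ! i $ k) * (ws ! j $ k)))"
      unfolding W_def using i j by (intro sum.cong, auto)
    also have "\<dots> = complex_of_real (c i * c j) * (if i = j then complex_of_real (s i) else 0)"
      unfolding sum_distrib_left[symmetric] orth[OF i j] ..
    also have "\<dots> = 1\<^sub>m n $$ (i,j)"
    proof (cases "i = j")
      case True
      have "c i * c i * s i = 1" unfolding c_def using spos[OF i]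
        by (simp add: field_simps)
      thus ?thesis using True i by (simp flip: of_real_mult)
    qed (use i j in auto)
    finally show "(cadj W * W) $$ (i,j) = 1\<^sub>m n $$ (i,j)" .
  qed (auto simp: W_def)
  have ws0: "ws ! 0 = v" using hdws ws(3) n by (metis hd_conv_nth list.size(3) less_not_refl2)
  have colW: "col W 0 = complex_of_real (c 0) \<cdot>\<^sub>v v"
    unfolding W_def using n v ws0 by (intro eq_vecI, auto)
  have AW: "(A * W) $$ (k,0) = e * W $$ (k,0)" if k: "k < n" for k
  proof -
    have "(A * W) $$ (k,0) = (A *\<^sub>v col W 0) $ k" using A Wc k n by auto
    also have "A *\<^sub>v col W 0 = complex_of_real (c 0) \<cdot>\<^sub>v (e \<cdot>\<^sub>v v)"
      unfolding colW mult_mat_vec[OF A v] Av ..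
    also have "\<dots> $ k = e * W $$ (k,0)" using k v n unfolding W_def ws0[symmetric] by simp
    finally show ?thesis .
  qed
  show ?thesis using unit Wc AW unfolding unitary_mat_def by blast
qed


lemma spectral:
  fixes A :: "complex mat"
  assumes "A \<in> carrier_mat n n" "hermitian_mat A"
  shows "\<exists>U d. unitary_mat n U \<and> A = U * mat_diag n (\<lambda>i. complex_of_real (d i)) * cadj U"
  using assms
proof (induction n arbitrary: A)
  case 0
  show ?case
    by (rule exI[of _ "1\<^sub>m 0"], rule exI[of _ "\<lambda>_. 0"], insert 0, auto simp: unitary_mat_def intro!: eq_matI)
next
  case (Suc m A)
  define n where "n = Suc m"
  have A: "A \<in> carrier_mat n n" using Suc n_def by auto
  have hA: "cadj A = A" using Suc unfolding hermitian_mat_def by auto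
  from spectrum_non_empty[OF A] obtain e where "eigenvalue A e" unfolding spectrum_def n_def by auto
  then obtain v where ev: "eigenvector A v e" unfolding eigenvalue_def by auto
  obtain W where W: "unitary_mat n W" and AW: "\<And>k. k<n \<Longrightarrow> (A*W)$$(k,0) = e * W$$(k,0)"
    using eigvec_unitary[OF A _ ev] n_def by auto
  have Wc: "W \<in> carrier_mat n n" and WW: "cadj W * W = 1\<^sub>m n" using W unfolding unitary_mat_def by auto
  have WW': "W * cadj W = 1\<^sub>m n" using unitary_right[OF W] .
  have cWc: "cadj W \<in> carrier_mat n n" using cadj_carrier_mat[OF Wc] .
  define A' where "A' = cadj W * A * W"
  have A'c: "A' \<in> carrier_mat n n" unfolding A'_def using Wc cWc A by auto
  have hA': "cadj A' = A'"
  proof -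
    have "cadj A' = cadj W * cadj (cadj W * A)"
      unfolding A'_def by (rule cadj_mult[of _ n n], insert cWc A Wc, auto)
    also have "cadj (cadj W * A) = cadj A * W"
      by (subst cadj_mult[of _ n n], insert cWc A Wc, auto)
    finally show ?thesis unfolding hA A'_def using cWc A Wc by auto
  qed
  have col0: "A' $$ (i,0) = (if i = 0 then e else 0)" if i: "i < n" for i
  proof -
    have n0: "0 < n" using n_def by auto
    have "A' = cadj W * (A * W)" unfolding A'_def using cWc A Wc by auto
    hence "A' $$ (i,0) = (\<Sum>k<n. cnj (W $$ (k,i)) * (A * W) $$ (k,0))"
      using cadj_mult_index[OF Wc _ i n0, of "A * W"] A Wc by auto
    also have "\<dots> = e * (\<Sum>k<n. cnj (W $$ (k,i)) * W $$ (k,0))"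
      by (subst sum_distrib_left, rule sum.cong, auto simp: AW)
    also have "(\<Sum>k<n. cnj (W $$ (k,i)) * W $$ (k,0)) = (cadj W * W) $$ (i,0)"
      using cadj_mult_index[OF Wc Wc i n0] by simp
    finally show ?thesis unfolding WW using i n0 by auto
  qed
  have n0: "0 < n" using n_def by auto
  have row0': "A' $$ (0,j) = cnj (A' $$ (j,0))" if j: "j < n" for j
  proof -
    have "A' $$ (0,j) = cadj A' $$ (0,j)" using hA' by simp
    thus ?thesis using j n0 A'c by auto
  qed
  have ecnj: "cnj e = e" using row0'[OF n0] col0[OF n0] by simp
  have ereal: "complex_of_real (Re e) = e" using ecnj
    by (metis Reals_cnj_iff complex_is_Real_iff of_real_Re)
  have row0: "A' $$ (0,j) = (if j = 0 then e else 0)" if j: "j < n" for j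
    using row0'[OF j] col0[OF j] ecnj by auto
  define A3 where "A3 = mat m m (\<lambda>(i,j). A' $$ (Suc i, Suc j))"
  have A3c: "A3 \<in> carrier_mat m m" unfolding A3_def by auto
  have hA3: "hermitian_mat A3" unfolding hermitian_mat_def
  proof (intro conjI)
    show "cadj A3 = A3"
    proof (rule eq_matI)
      fix i j assume "i < dim_row A3" "j < dim_col A3"
      hence i: "i < m" and j: "j < m" unfolding A3_def by auto
      have "cadj A3 $$ (i,j) = cnj (A' $$ (Suc j, Suc i))" using i j unfolding A3_def by auto
      also have "\<dots> = cadj A' $$ (Suc i, Suc j)" using i j A'c n_def by auto
      finally show "cadj A3 $$ (i,j) = A3 $$ (i,j)" unfolding hA' using i j A3_def by auto
    qed (auto simp: A3_def)
  qed (auto simp: A3_def)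
  from Suc.IH[OF A3c hA3] obtain U3 d3 where U3: "unitary_mat m U3"
    and A3eq: "A3 = U3 * mat_diag m (\<lambda>i. complex_of_real (d3 i)) * cadj U3" by auto
  have U3c: "U3 \<in> carrier_mat m m" and U3U3: "cadj U3 * U3 = 1\<^sub>m m" using U3 unfolding unitary_mat_def by auto
  define V where "V = mat n n (\<lambda>(i,j). if i = 0 then (if j = 0 then 1 else 0) else if j = 0 then 0 else U3 $$ (i-1, j-1))"
  define d where "d = (\<lambda>i. if i = 0 then Re e else d3 (i-1))"
  have Vc: "V \<in> carrier_mat n n" unfolding V_def by auto
  have cVc: "cadj V \<in> carrier_mat n n" using cadj_carrier_mat[OF Vc] .
  have VV: "cadj V * V = 1\<^sub>m n"
  proof (rule eq_matI)
    fix i j assume "i < dim_row (1\<^sub>m n :: complex mat)" "j < dim_col (1\<^sub>m n :: complex mat)"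
    hence i: "i < n" and j: "j < n" by auto
    have "(cadj V * V) $$ (i,j) = (\<Sum>k<n. cnj (V $$ (k,i)) * V $$ (k,j))"
      using cadj_mult_index[OF Vc Vc i j] .
    also have "\<dots> = cnj (V $$ (0,i)) * V $$ (0,j) + (\<Sum>k<m. cnj (V $$ (Suc k,i)) * V $$ (Suc k,j))"
      unfolding n_def by (rule sum.lessThan_Suc_shift)
    also have "\<dots> = 1\<^sub>m n $$ (i,j)"
    proof (cases i)
      case 0 thus ?thesis using i j unfolding V_def by (auto simp: n_def)
    next
      case (Suc i')
      show ?thesis
      proof (cases j)
        case 0 thus ?thesis using i j Suc unfolding V_def by (auto simp: n_def)
      next
        case (Suc j')
        have i': "i' < m" and j': "j' < m" using i j \<open>i = Suc i'\<close> Suc n_def by auto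
        have "(\<Sum>k<m. cnj (V $$ (Suc k,i)) * V $$ (Suc k,j)) = (\<Sum>k<m. cnj (U3 $$ (k,i')) * U3 $$ (k,j'))"
          using i j \<open>i = Suc i'\<close> Suc unfolding V_def by (intro sum.cong, auto simp: n_def)
        also have "\<dots> = (cadj U3 * U3) $$ (i',j')" using cadj_mult_index[OF U3c U3c i' j'] by simp
        finally show ?thesis unfolding U3U3 using i' j' \<open>i = Suc i'\<close> Suc V_def n_def by auto
      qed
    qed
    finally show "(cadj V * V) $$ (i,j) = 1\<^sub>m n $$ (i,j)" .
  qed (auto simp: V_def)
  define D where "D = mat_diag n (\<lambda>i. complex_of_real (d i))"
  have Dc: "D \<in> carrier_mat n n" unfolding D_def by auto
  have A'eq: "A' = V * D * cadj V"
  proof (rule eq_matI)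
    fix i j assume "i < dim_row (V * D * cadj V)" "j < dim_col (V * D * cadj V)"
    hence i: "i < n" and j: "j < n" using Vc by auto
    have "(V * D * cadj V) $$ (i,j) = (\<Sum>k<n. V $$ (i,k) * complex_of_real (d k) * cnj (V $$ (j,k)))"
      unfolding D_def using udu_index[OF Vc i j] .
    also have "\<dots> = V $$ (i,0) * complex_of_real (d 0) * cnj (V $$ (j,0)) +
       (\<Sum>k<m. V $$ (i,Suc k) * complex_of_real (d (Suc k)) * cnj (V $$ (j,Suc k)))"
      unfolding n_def by (rule sum.lessThan_Suc_shift)
    also have "\<dots> = A' $$ (i,j)"
    proof (cases i)
      case 0 thus ?thesis using i j row0[OF j] ereal unfolding V_def d_def by (auto simp: n_def)
    next
      case (Suc i')
      show ?thesis
      proof (cases j)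
        case 0 thus ?thesis using i j Suc col0[OF i] unfolding V_def by (auto simp: n_def)
      next
        case (Suc j')
        have i': "i' < m" and j': "j' < m" using i j \<open>i = Suc i'\<close> Suc n_def by auto
        have "(\<Sum>k<m. V $$ (i,Suc k) * complex_of_real (d (Suc k)) * cnj (V $$ (j,Suc k))) =
              (\<Sum>k<m. U3 $$ (i',k) * complex_of_real (d3 k) * cnj (U3 $$ (j',k)))"
          using i j \<open>i = Suc i'\<close> Suc unfolding V_def d_def by (intro sum.cong, auto simp: n_def)
        also have "\<dots> = A3 $$ (i',j')" unfolding A3eq using udu_index[OF U3c i' j'] by simp
        also have "\<dots> = A' $$ (i,j)" unfolding A3_def using i' j' \<open>i = Suc i'\<close> Suc by simp
        finally show ?thesis using \<open>i = Suc i'\<close> Suc i j unfolding V_def by simp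
      qed
    qed
    finally show "A' $$ (i,j) = (V * D * cadj V) $$ (i,j)" by simp
  qed (use A'c Vc in auto)
  define U where "U = W * V"
  have Uc: "U \<in> carrier_mat n n" unfolding U_def using Wc Vc by auto
  have cU: "cadj U = cadj V * cadj W" unfolding U_def by (rule cadj_mult[OF Wc Vc])
  have "cadj U * U = cadj V * (cadj W * W) * V"
    unfolding cU unfolding U_def using Wc Vc cWc cVc by (simp add: assoc_mult_mat[of _ n n _ n _ n])
  hence UU: "cadj U * U = 1\<^sub>m n" unfolding WW using Vc cVc VV by simp
  have "A = (W * cadj W) * A * (W * cadj W)" unfolding WW' using A by simp
  also have "\<dots> = W * A' * cadj W" unfolding A'_def using Wc cWc A
    by (simp add: assoc_mult_mat[of _ n n _ n _ n])
  also have "\<dots> = U * D * cadj U" unfolding A'eq cU unfolding U_def using Wc cWc Vc cVc Dc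
    by (simp add: assoc_mult_mat[of _ n n _ n _ n])
  finally have "A = U * D * cadj U" .
  thus ?case using UU Uc unfolding unitary_mat_def D_def n_def by blast
qed


lemma eig_ok:
  assumes "\<rho> \<in> carrier_mat n n" "hermitian_mat \<rho>" "eig_decomp \<rho> = (U, d)"
  shows "unitary_mat n U \<and> \<rho> = U * mat_diag n (\<lambda>i. complex_of_real (d i)) * cadj U"
proof -
  have dr: "dim_row \<rho> = n" using assms by auto
  from spectral[OF assms(1,2)] obtain U0 d0 where
    "unitary_mat n U0 \<and> \<rho> = U0 * mat_diag n (\<lambda>i. complex_of_real (d0 i)) * cadj U0" by blast
  hence ex: "\<exists>p. (\<lambda>(U, d). unitary_mat (dim_row \<rho>) U \<and>
      \<rho> = U * mat_diag (dim_row \<rho>) (\<lambda>i. complex_of_real (d i)) * cadj U) p"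
    unfolding dr by (intro exI[of _ "(U0,d0)"], simp)
  from someI_ex[OF ex] assms(3) show ?thesis unfolding eig_decomp_def dr by simp
qed

lemma re_cnj_div: "Re (cnj y * (y / complex_of_real r)) = (cmod y)^2 / r"
proof -
  have "cnj y * (y / complex_of_real r) = (y * cnj y) / complex_of_real r" by simp
  also have "y * cnj y = complex_of_real ((cmod y)^2)" by (metis complex_norm_square)
  finally have "cnj y * (y / complex_of_real r) = complex_of_real ((cmod y)^2 / r)" by simp
  thus ?thesis by (metis Re_complex_of_real)
qed

lemma norm_sq_formula:
  assumes rc: "\<rho> \<in> carrier_mat n n" and h: "hermitian_mat \<rho>" and ed: "eig_decomp \<rho> = (U, d)"
    and X: "X \<in> carrier_mat n n"
  shows "norm_sq g \<rho> X = (\<Sum>i<n. \<Sum>k<n. (cmod ((cadj U * X * U) $$ (k,i)))^2 / mean_f g (d k) (d i))"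
proof -
  from eig_ok[OF rc h ed] have U: "unitary_mat n U" by auto
  hence Uc: "U \<in> carrier_mat n n" unfolding unitary_mat_def by auto
  have cUc: "cadj U \<in> carrier_mat n n" using cadj_carrier_mat[OF Uc] .
  have cXc: "cadj X \<in> carrier_mat n n" using cadj_carrier_mat[OF X] .
  define Y where "Y = cadj U * X * U"
  have Yc: "Y \<in> carrier_mat n n" unfolding Y_def using Uc cUc X by auto
  define M where "M = mat n n (\<lambda>(i,j). Y $$ (i,j) / complex_of_real (mean_f g (d i) (d j)))"
  have Mc: "M \<in> carrier_mat n n" unfolding M_def by auto
  have dr: "dim_row \<rho> = n" using rc by auto
  have msi: "mean_superop_inv g \<rho> X = U * M * cadj U"
    unfolding mean_superop_inv_def ed dr Let_def M_def Y_def by simp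
  have cY: "cadj Y = cadj U * cadj X * U"
  proof -
    have "cadj Y = cadj U * cadj (cadj U * X)" unfolding Y_def
      by (rule cadj_mult[of _ n n], insert cUc X Uc, auto)
    also have "cadj (cadj U * X) = cadj X * U" by (subst cadj_mult[OF cUc X], simp)
    finally show ?thesis using cUc cXc Uc by simp
  qed
  have "mtrace (cadj X * (U * M * cadj U)) = mtrace ((cadj X * U * M) * cadj U)"
    using cXc Uc Mc cUc by (simp add: assoc_mult_mat[of _ n n _ n _ n])
  also have "\<dots> = mtrace (cadj U * (cadj X * U * M))"
    by (rule mtrace_comm[of _ n n], insert cXc Uc Mc cUc, auto)
  also have "\<dots> = mtrace (cadj Y * M)" unfolding cY
    using cXc Uc Mc cUc by (simp add: assoc_mult_mat[of _ n n _ n _ n])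
  also have "\<dots> = (\<Sum>i<n. (cadj Y * M) $$ (i,i))" using Yc by (simp add: mtrace_def)
  also have "\<dots> = (\<Sum>i<n. \<Sum>k<n. cnj (Y $$ (k,i)) * M $$ (k,i))"
    by (rule sum.cong[OF refl], rule cadj_mult_index[OF Yc Mc], auto)
  finally have tr: "mtrace (cadj X * (U * M * cadj U)) = (\<Sum>i<n. \<Sum>k<n. cnj (Y $$ (k,i)) * M $$ (k,i))" .
  have "norm_sq g \<rho> X = (\<Sum>i<n. \<Sum>k<n. Re (cnj (Y $$ (k,i)) * M $$ (k,i)))"
    unfolding norm_sq_def msi tr by (simp add: Re_sum)
  also have "\<dots> = (\<Sum>i<n. \<Sum>k<n. (cmod (Y $$ (k,i)))^2 / mean_f g (d k) (d i))"
  proof (intro sum.cong refl)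
    fix i k assume "i \<in> {..<n}" "k \<in> {..<n}"
    hence "M $$ (k,i) = Y $$ (k,i) / complex_of_real (mean_f g (d k) (d i))" unfolding M_def by simp
    thus "Re (cnj (Y $$ (k,i)) * M $$ (k,i)) = (cmod (Y $$ (k,i)))^2 / mean_f g (d k) (d i)"
      by (simp only: re_cnj_div)
  qed
  finally show ?thesis unfolding Y_def .
qed

lemma Y_entry:
  assumes rc: "\<rho> \<in> carrier_mat n n" and h: "hermitian_mat \<rho>" and ed: "eig_decomp \<rho> = (U, d)"
    and A: "A \<in> carrier_mat n n" and k: "k < n" and i: "i < n"
  shows "(cadj U * (\<i> \<cdot>\<^sub>m (\<rho> * A - A * \<rho>)) * U) $$ (k,i)
     = \<i> * (complex_of_real (d k) - complex_of_real (d i)) * (cadj U * A * U) $$ (k,i)"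
proof -
  from eig_ok[OF rc h ed] have U: "unitary_mat n U"
    and rho: "\<rho> = U * mat_diag n (\<lambda>i. complex_of_real (d i)) * cadj U" by auto
  define D where "D = mat_diag n (\<lambda>i. complex_of_real (d i))"
  have Dc: "D \<in> carrier_mat n n" unfolding D_def by auto
  have Uc: "U \<in> carrier_mat n n" and UU: "cadj U * U = 1\<^sub>m n" using U unfolding unitary_mat_def by auto
  have UU': "U * cadj U = 1\<^sub>m n" using unitary_right[OF U] .
  have cUc: "cadj U \<in> carrier_mat n n" using cadj_carrier_mat[OF Uc] .
  have r: "\<rho> = U * D * cadj U" using rho unfolding D_def .
  have l1: "cadj U * \<rho> = D * cadj U"
  proof -
    have "cadj U * \<rho> = (cadj U * U) * D * cadj U" unfolding r using Uc cUc Dc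
      by (simp add: assoc_mult_mat[of _ n n _ n _ n])
    thus ?thesis unfolding UU using Dc cUc by simp
  qed
  have l2: "\<rho> * U = U * D"
  proof -
    have "\<rho> * U = U * D * (cadj U * U)" unfolding r using Uc cUc Dc
      by (simp add: assoc_mult_mat[of _ n n _ n _ n])
    thus ?thesis unfolding UU using Dc Uc by simp
  qed
  define B where "B = cadj U * A * U"
  have Bc: "B \<in> carrier_mat n n" unfolding B_def using cUc A Uc by auto
  have e1: "cadj U * (\<rho> * A) * U = D * B"
  proof -
    have "cadj U * (\<rho> * A) * U = (cadj U * \<rho>) * A * U" using cUc rc A Uc
      by (simp add: assoc_mult_mat[of _ n n _ n _ n])
    thus ?thesis unfolding l1 B_def using cUc Dc A Uc by (simp add: assoc_mult_mat[of _ n n _ n _ n])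
  qed
  have e2: "cadj U * (A * \<rho>) * U = B * D"
  proof -
    have "cadj U * (A * \<rho>) * U = cadj U * A * (\<rho> * U)" using cUc rc A Uc
      by (simp add: assoc_mult_mat[of _ n n _ n _ n])
    thus ?thesis unfolding l2 B_def using cUc Dc A Uc by (simp add: assoc_mult_mat[of _ n n _ n _ n])
  qed
  have Pc: "\<rho> * A - A * \<rho> \<in> carrier_mat n n" using rc A by auto
  have "cadj U * (\<i> \<cdot>\<^sub>m (\<rho> * A - A * \<rho>)) = \<i> \<cdot>\<^sub>m (cadj U * (\<rho> * A - A * \<rho>))"
    by (rule mult_smult_distrib[OF cUc Pc])
  hence "cadj U * (\<i> \<cdot>\<^sub>m (\<rho> * A - A * \<rho>)) * U = \<i> \<cdot>\<^sub>m (cadj U * (\<rho> * A - A * \<rho>) * U)"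
    using mult_smult_assoc_mat[OF _ Uc, of "cadj U * (\<rho> * A - A * \<rho>)" n] cUc Pc by simp
  also have "cadj U * (\<rho> * A - A * \<rho>) = cadj U * (\<rho> * A) - cadj U * (A * \<rho>)"
    by (rule mult_minus_distrib_mat[OF cUc], insert rc A, auto)
  also have "(cadj U * (\<rho> * A) - cadj U * (A * \<rho>)) * U = cadj U * (\<rho> * A) * U - cadj U * (A * \<rho>) * U"
    by (rule minus_mult_distrib_mat[OF _ _ Uc], insert cUc rc A, auto)
  also have "\<dots> = D * B - B * D" unfolding e1 e2 ..
  finally have "cadj U * (\<i> \<cdot>\<^sub>m (\<rho> * A - A * \<rho>)) * U = \<i> \<cdot>\<^sub>m (D * B - B * D)" .
  moreover have "(D * B) $$ (k,i) = complex_of_real (d k) * B $$ (k,i)"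
    unfolding D_def using mat_diag_mult_left[OF Bc] k i by simp
  moreover have "(B * D) $$ (k,i) = B $$ (k,i) * complex_of_real (d i)"
    unfolding D_def using mat_diag_mult_right[OF Bc] k i by simp
  moreover have "(\<i> \<cdot>\<^sub>m (D * B - B * D)) $$ (k,i) = \<i> * ((D * B) $$ (k,i) - (B * D) $$ (k,i))"
    using k i Bc Dc by simp
  ultimately show ?thesis unfolding B_def[symmetric] by (simp add: algebra_simps)
qed

lemma f_info_formula:
  assumes rc: "\<rho> \<in> carrier_mat n n" and h: "hermitian_mat \<rho>" and ed: "eig_decomp \<rho> = (U, d)"
    and A: "A \<in> carrier_mat n n"
  shows "f_info g \<rho> A = fzero g / 2 *
     (\<Sum>i<n. \<Sum>k<n. (d k - d i)^2 * (cmod ((cadj U * A * U) $$ (k,i)))^2 / mean_f g (d k) (d i))"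
proof -
  have Xc: "\<i> \<cdot>\<^sub>m (\<rho> * A - A * \<rho>) \<in> carrier_mat n n" using rc A by auto
  show ?thesis unfolding f_info_def norm_sq_formula[OF rc h ed Xc]
    by (intro arg_cong[where f="\<lambda>x. fzero g / 2 * x"] sum.cong refl,
        simp add: Y_entry[OF rc h ed A] norm_mult power_mult_distrib flip: of_real_diff)
qed


lemma alg_ii:
  fixes x y z F k :: real
  assumes x: "x > 0" and y: "y > 0" and F: "F > 0" and k: "k \<ge> 1"
  shows "(x * ((((y/x) + 1) - ((y/x) - 1)^2 * z / F) / 2) \<le>
           (1 - 1 / k) * ((x + y) / 2) + (1 / k) * (2 * x * y / (x + y)))
         \<longleftrightarrow> (x = y \<or> F \<le> k * z * (1 + y/x))"
proof -
  have L: "x * ((((y/x) + 1) - ((y/x) - 1)^2 * z / F) / 2) = (x+y)/2 - (x-y)^2*z/(2*x*F)"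
    using x F by (simp add: field_simps power2_eq_square)
  have s0: "x + y \<noteq> 0" using x y by simp
  have k0: "k \<noteq> 0" using k by simp
  have gen: "(1 - K) * P + K * Q = P - K * (P - Q)" for K P Q :: real by (simp add: algebra_simps)
  have R1: "(1 - 1 / k) * ((x + y) / 2) + (1 / k) * (2 * x * y / (x + y)) = (x+y)/2 - (1/k) * ((x+y)/2 - 2*x*y/(x+y))"
    by (rule gen)
  have R2: "(x+y)/2 - 2*x*y/(x+y) = (x-y)^2/(2*(x+y))" using s0 by (simp add: field_simps power2_eq_square)
  have R: "(1 - 1 / k) * ((x + y) / 2) + (1 / k) * (2 * x * y / (x + y)) = (x+y)/2 - (x-y)^2/(2*k*(x+y))"
    unfolding R1 R2 using k0 s0 by simp
  have "(x+y)/2 - (x-y)^2*z/(2*x*F) \<le> (x+y)/2 - (x-y)^2/(2*k*(x+y)) \<longleftrightarrow>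
        (x-y)^2 * (1/(2*k*(x+y))) \<le> (x-y)^2 * (z/(2*x*F))" by simp
  also have "\<dots> \<longleftrightarrow> (x = y \<or> F \<le> k * z * (1 + y/x))"
  proof (cases "x = y")
    case True thus ?thesis by simp
  next
    case False
    hence s: "(x-y)^2 > 0" by simp
    have gen2: "B > 0 \<Longrightarrow> C > 0 \<Longrightarrow> (1/B \<le> w/C) = (C \<le> w*B)" for B C w :: real
      by (simp add: field_simps)
    have "(x-y)^2 * (1/(2*k*(x+y))) \<le> (x-y)^2 * (z/(2*x*F)) \<longleftrightarrow> 1/(2*k*(x+y)) \<le> z/(2*x*F)"
      by (rule mult_le_cancel_left_pos[OF s])
    also have "\<dots> \<longleftrightarrow> 2*x*F \<le> z * (2*k*(x+y))"
      by (rule gen2, insert x y k F, auto)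
    also have "\<dots> \<longleftrightarrow> 2*(x*F) \<le> 2*(x*(k * z * (1 + y/x)))"
    proof -
      have e1: "z * (2*k*(x+y)) = 2*(x*(k * z * (1 + y/x)))" using x by (simp add: field_simps)
      have e2: "2*x*F = 2*(x*F)" by simp
      show ?thesis by (simp only: e1 e2)
    qed
    also have "\<dots> \<longleftrightarrow> F \<le> k * z * (1 + y/x)"
      using x by (simp add: mult.assoc)
    finally show ?thesis using False by simp
  qed
  finally show ?thesis unfolding L R .
qed

lemma fop_pos: "Fop f \<Longrightarrow> t > 0 \<Longrightarrow> f t > 0" unfolding Fop_def by auto

lemma ii_iff:
  assumes f: "Fop f" and k: "k \<ge> 1"
  shows "(\<forall>x>0. \<forall>y>0. mean_f (ftilde f) x y \<le>
                  (1 - 1 / k) * ((x + y) / 2) + (1 / k) * (2 * x * y / (x + y)))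
       \<longleftrightarrow> (\<forall>t>0. t \<noteq> 1 \<longrightarrow> f t \<le> k * fzero f * (1 + t))"
proof -
  have eq: "mean_f (ftilde f) x y \<le> (1 - 1 / k) * ((x + y) / 2) + (1 / k) * (2 * x * y / (x + y))
     \<longleftrightarrow> (x = y \<or> f (y/x) \<le> k * fzero f * (1 + y/x))" if "x > 0" "y > 0" for x y
    unfolding mean_f_def ftilde_def
    by (rule alg_ii[OF that fop_pos[OF f divide_pos_pos[OF that(2,1)]] k])
  show ?thesis
  proof
    assume H: "\<forall>x>0. \<forall>y>0. mean_f (ftilde f) x y \<le> (1 - 1 / k) * ((x + y) / 2) + (1 / k) * (2 * x * y / (x + y))"
    show "\<forall>t>0. t \<noteq> 1 \<longrightarrow> f t \<le> k * fzero f * (1 + t)"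
    proof (intro allI impI)
      fix t :: real assume t: "t > 0" "t \<noteq> 1"
      have one: "(0::real) < 1" by simp
      have "mean_f (ftilde f) 1 t \<le> (1 - 1 / k) * ((1 + t) / 2) + (1 / k) * (2 * 1 * t / (1 + t))"
        using H[rule_format, OF one t(1)] .
      from eq[of 1 t, THEN iffD1, OF _ _ this] t show "f t \<le> k * fzero f * (1 + t)" by auto
    qed
  next
    assume H: "\<forall>t>0. t \<noteq> 1 \<longrightarrow> f t \<le> k * fzero f * (1 + t)"
    show "\<forall>x>0. \<forall>y>0. mean_f (ftilde f) x y \<le> (1 - 1 / k) * ((x + y) / 2) + (1 / k) * (2 * x * y / (x + y))"
    proof (intro allI impI)
      fix x y :: real assume xy: "x > 0" "y > 0"
      show "mean_f (ftilde f) x y \<le> (1 - 1 / k) * ((x + y) / 2) + (1 / k) * (2 * x * y / (x + y))"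
      proof (cases "x = y")
        case True thus ?thesis using eq[OF xy] by blast
      next
        case False
        hence "y / x \<noteq> 1" using xy by (simp add: divide_eq_1_iff)
        hence "f (y/x) \<le> k * fzero f * (1 + y/x)" using H xy by simp
        thus ?thesis using eq[OF xy] by blast
      qed
    qed
  qed
qed

lemma mat_fun_1:
  fixes a :: real
  shows "mat_fun f (mat 1 1 (\<lambda>_. complex_of_real a)) $$ (0,0) = complex_of_real (f a)"
    "mat_fun f (mat 1 1 (\<lambda>_. complex_of_real a)) \<in> carrier_mat 1 1"
proof -
  define A where "A = mat 1 1 (\<lambda>_. complex_of_real a)"
  have Ac: "A \<in> carrier_mat 1 1" unfolding A_def by auto
  have hA: "hermitian_mat A" unfolding hermitian_mat_def A_def by (auto intro!: eq_matI)
  obtain U d where ed: "eig_decomp A = (U,d)" by (cases "eig_decomp A", auto)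
  from eig_ok[OF Ac hA ed] have U: "unitary_mat 1 U"
    and Aeq: "A = U * mat_diag 1 (\<lambda>i. complex_of_real (d i)) * cadj U" by auto
  have Uc: "U \<in> carrier_mat 1 1" and UU: "cadj U * U = 1\<^sub>m 1" using U unfolding unitary_mat_def by auto
  define u where "u = U $$ (0,0)"
  have "(cadj U * U) $$ (0,0) = cnj u * u" using cadj_mult_index[OF Uc Uc, of 0 0] unfolding u_def by simp
  hence uu: "cnj u * u = 1" unfolding UU by simp
  have "A $$ (0,0) = u * complex_of_real (d 0) * cnj u"
    using arg_cong[OF Aeq, of "\<lambda>M. M $$ (0,0)"] udu_index[OF Uc, of 0 0] unfolding u_def by simp
  hence "complex_of_real a = complex_of_real (d 0) * (cnj u * u)" unfolding A_def by (simp add: ac_simps)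
  hence ad: "a = d 0" using uu by simp
  have mf: "mat_fun f A = U * mat_diag 1 (\<lambda>i. complex_of_real (f (d i))) * cadj U"
    unfolding mat_fun_def ed using Ac by simp
  have "mat_fun f A $$ (0,0) = u * complex_of_real (f (d 0)) * cnj u"
    unfolding mf using udu_index[OF Uc, of 0 0] unfolding u_def by simp
  also have "\<dots> = complex_of_real (f a)" using uu ad by (simp add: ac_simps)
  finally show "mat_fun f (mat 1 1 (\<lambda>_. complex_of_real a)) $$ (0,0) = complex_of_real (f a)"
    unfolding A_def .
  show "mat_fun f (mat 1 1 (\<lambda>_. complex_of_real a)) \<in> carrier_mat 1 1"
    unfolding A_def[symmetric] mf using Uc cadj_carrier_mat[OF Uc] by auto
qed

lemma qform_1: assumes "M \<in> carrier_mat 1 1" and "v \<in> carrier_vec 1"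
  shows "qform M v = cnj (v $ 0) * M $$ (0,0) * v $ 0"
  using assms unfolding qform_def by (auto simp: scalar_prod_def)

lemma pd_1: assumes "a > 0" shows "pd_mat (mat 1 1 (\<lambda>_. complex_of_real a))"
  unfolding pd_mat_def hermitian_mat_def
proof (intro conjI ballI impI)
  fix v :: "complex vec" assume v: "v \<in> carrier_vec (dim_row (mat 1 1 (\<lambda>_. complex_of_real a)))"
    and v0: "v \<noteq> 0\<^sub>v (dim_row (mat 1 1 (\<lambda>_. complex_of_real a)))"
  hence v1: "v \<in> carrier_vec 1" by simp
  have "v $ 0 \<noteq> 0"
  proof
    assume "v $ 0 = 0"
    hence "v = 0\<^sub>v 1" using v1 by (intro eq_vecI, auto)
    thus False using v0 by simp
  qed
  hence "cmod (v $ 0) > 0" by simp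
  have nv: "v$0 * cnj(v$0) = complex_of_real ((cmod (v$0))^2)" by (simp only: complex_norm_square)
  have "qform (mat 1 1 (\<lambda>_. complex_of_real a)) v = complex_of_real a * (v$0 * cnj(v$0))"
    using qform_1[OF _ v1, of "mat 1 1 (\<lambda>_. complex_of_real a)"] by (simp add: ac_simps)
  hence "qform (mat 1 1 (\<lambda>_. complex_of_real a)) v = complex_of_real (a * (cmod (v $ 0))^2)"
    unfolding nv by simp
  thus "0 < Re (qform (mat 1 1 (\<lambda>_. complex_of_real a)) v)" using assms \<open>cmod (v $ 0) > 0\<close> by simp
qed (auto intro!: eq_matI)

lemma fop_mono:
  assumes f: "Fop f" and a: "0 < a" and ab: "a \<le> b"
  shows "f a \<le> f b"
proof -
  have om: "operator_monotone f" using f unfolding Fop_def by auto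
  define A where "A = mat 1 1 (\<lambda>_. complex_of_real a)"
  define B where "B = mat 1 1 (\<lambda>_. complex_of_real b)"
  have Ac: "A \<in> carrier_mat 1 1" and Bc: "B \<in> carrier_mat 1 1" unfolding A_def B_def by auto
  have pA: "pd_mat A" unfolding A_def using pd_1 a by auto
  have pB: "pd_mat B" unfolding B_def using pd_1 a ab by auto
  have BA: "B - A = mat 1 1 (\<lambda>_. complex_of_real (b - a))" unfolding A_def B_def by (auto intro!: eq_matI)
  have psdBA: "psd_mat (B - A)" unfolding psd_mat_def hermitian_mat_def BA
  proof (intro conjI ballI)
    fix v :: "complex vec" assume v: "v \<in> carrier_vec (dim_row (mat 1 1 (\<lambda>_. complex_of_real (b - a))))"
    hence v1: "v \<in> carrier_vec 1" by simp
    have nv: "v$0 * cnj(v$0) = complex_of_real ((cmod (v$0))^2)" by (simp only: complex_norm_square)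
    have "qform (mat 1 1 (\<lambda>_. complex_of_real (b - a))) v = complex_of_real (b - a) * (v$0 * cnj(v$0))"
      using qform_1[OF _ v1, of "mat 1 1 (\<lambda>_. complex_of_real (b - a))"] by (simp only: ac_simps index_mat, simp)
    hence "qform (mat 1 1 (\<lambda>_. complex_of_real (b - a))) v = complex_of_real ((b - a) * (cmod (v $ 0))^2)"
      unfolding nv by simp
    thus "0 \<le> Re (qform (mat 1 1 (\<lambda>_. complex_of_real (b - a))) v)" using ab by simp
  qed (auto intro!: eq_matI)
  have "psd_mat (mat_fun f B - mat_fun f A)"
    using om[unfolded operator_monotone_def, rule_format, OF Ac Bc pA pB psdBA] .
  have c1: "mat_fun f A \<in> carrier_mat 1 1" "mat_fun f B \<in> carrier_mat 1 1"
    unfolding A_def B_def by (rule mat_fun_1(2))+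
  have dr: "dim_row (mat_fun f B - mat_fun f A) = 1" using c1 by simp
  have vc: "vec 1 (\<lambda>_. 1) \<in> carrier_vec (dim_row (mat_fun f B - mat_fun f A))" unfolding dr by simp
  from \<open>psd_mat (mat_fun f B - mat_fun f A)\<close> vc
  have H: "0 \<le> Re (qform (mat_fun f B - mat_fun f A) (vec 1 (\<lambda>_. 1)))"
    unfolding psd_mat_def by blast
  have "qform (mat_fun f B - mat_fun f A) (vec 1 (\<lambda>_. 1)) = (mat_fun f B - mat_fun f A) $$ (0,0)"
  proof -
    have c2: "mat_fun f B - mat_fun f A \<in> carrier_mat 1 1" using c1 by auto
    show ?thesis using qform_1[OF c2, of "vec 1 (\<lambda>_. 1)"] by simp
  qed
  also have "\<dots> = complex_of_real (f b - f a)" using c1 mat_fun_1(1)[of f a] mat_fun_1(1)[of f b]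
    unfolding A_def B_def by simp
  finally show ?thesis using H by simp
qed

lemma iii_iff:
  assumes f: "Fop f" and k: "k \<ge> 1"
  shows "(\<forall>x>0. f x \<le> 2 * k * fzero f * ((1 + x) / 2))
       \<longleftrightarrow> (\<forall>t>0. t \<noteq> 1 \<longrightarrow> f t \<le> k * fzero f * (1 + t))"
proof
  assume "\<forall>x>0. f x \<le> 2 * k * fzero f * ((1 + x) / 2)"
  thus "\<forall>t>0. t \<noteq> 1 \<longrightarrow> f t \<le> k * fzero f * (1 + t)" by (simp add: mult.assoc)
next
  assume H: "\<forall>t>0. t \<noteq> 1 \<longrightarrow> f t \<le> k * fzero f * (1 + t)"
  have f1: "f 1 = 1" using f unfolding Fop_def by auto
  have G: "1 \<le> k * fzero f * (1 + s)" if s: "s > 1" for s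
  proof -
    have "f 1 \<le> f s" by (rule fop_mono[OF f]) (use s in auto)
    moreover have "f s \<le> k * fzero f * (1 + s)" using H[rule_format, of s] s by simp
    ultimately show ?thesis using f1 by simp
  qed
  define c where "c = k * fzero f"
  have c1: "1 \<le> 2 * c"
  proof (rule ccontr)
    assume "\<not> 1 \<le> 2 * c"
    hence lt: "2 * c < 1" by simp
    have "1 \<le> c * 3" using G[of 2] unfolding c_def by simp
    hence cpos: "c > 0" by simp
    define s where "s = 1 + (1 - 2*c) / (2*c)"
    have "s > 1" unfolding s_def using lt cpos by simp
    from G[OF this] have "1 \<le> c * (1 + s)" unfolding c_def by simp
    also have "c * (1 + s) = (1 + 2*c) / 2" unfolding s_def using cpos by (simp add: field_simps)
    finally show False using lt by simp
  qed
  show "\<forall>x>0. f x \<le> 2 * k * fzero f * ((1 + x) / 2)"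
  proof (intro allI impI)
    fix x :: real assume x: "x > 0"
    show "f x \<le> 2 * k * fzero f * ((1 + x) / 2)"
    proof (cases "x = 1")
      case True thus ?thesis using f1 c1 unfolding c_def by simp
    next
      case False thus ?thesis using H x by (simp add: mult.assoc)
    qed
  qed
qed


lemma fzero_SLD: "fzero f_SLD = 1/2"
proof -
  have e: "f_SLD = (\<lambda>x. (1 + x) / 2)" by (rule ext, simp add: f_SLD_def)
  have "((\<lambda>x::real. x) \<longlongrightarrow> 0) (at_right 0)" by (rule tendsto_ident_at)
  hence "((\<lambda>x::real. 1 + x) \<longlongrightarrow> 1 + 0) (at_right 0)" by (rule tendsto_add[OF tendsto_const])
  hence "((\<lambda>x::real. (1 + x) / 2) \<longlongrightarrow> (1 + 0) / 2) (at_right 0)"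
    by (rule tendsto_divide[OF _ tendsto_const], simp)
  hence "Lim (at_right (0::real)) (\<lambda>x::real. (1 + x) / 2) = (1 + 0) / 2"
    by (rule tendsto_Lim[OF trivial_limit_at_right_real])
  thus ?thesis unfolding fzero_def e by simp
qed

lemma mean_SLD: "a > 0 \<Longrightarrow> mean_f f_SLD a b = (a + b) / 2"
  unfolding mean_f_def f_SLD_def by (simp add: field_simps)

lemma mean_sym: assumes f: "Fop f" and a: "a > 0" and b: "b > 0"
  shows "mean_f f a b = mean_f f b a"
proof -
  have sy: "\<forall>t>0. t * f (1 / t) = f t" using f unfolding Fop_def by auto
  have "(b/a) * f (1 / (b/a)) = f (b/a)" using sy[rule_format, OF divide_pos_pos[OF b a]] .
  hence "(b/a) * f (a/b) = f (b/a)" by simp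
  hence "a * f (b/a) = a * ((b/a) * f (a/b))" by simp
  also have "\<dots> = b * f (a/b)" using a by simp
  finally have "a * f (b/a) = b * f (a/b)" .
  thus ?thesis unfolding mean_f_def .
qed

lemma eig_pos:
  assumes rc: "\<rho> \<in> carrier_mat n n" and pd: "pd_mat \<rho>" and ed: "eig_decomp \<rho> = (U, d)" and i: "i < n"
  shows "d i > 0"
proof -
  have h: "hermitian_mat \<rho>" using pd unfolding pd_mat_def by auto
  from eig_ok[OF rc h ed] have U: "unitary_mat n U"
    and r: "\<rho> = U * mat_diag n (\<lambda>i. complex_of_real (d i)) * cadj U" by auto
  define D where "D = mat_diag n (\<lambda>i. complex_of_real (d i))"
  have Dc: "D \<in> carrier_mat n n" unfolding D_def by auto
  have Uc: "U \<in> carrier_mat n n" and UU: "cadj U * U = 1\<^sub>m n" using U unfolding unitary_mat_def by auto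
  have cUc: "cadj U \<in> carrier_mat n n" using cadj_carrier_mat[OF Uc] .
  have "cadj U * \<rho> * U = (cadj U * U) * D * (cadj U * U)" unfolding r D_def[symmetric]
    using Uc cUc Dc by (simp add: assoc_mult_mat[of _ n n _ n _ n])
  hence DD: "cadj U * (\<rho> * U) = D" unfolding UU using Dc cUc rc Uc by simp
  define u where "u = col U i"
  have uc: "u \<in> carrier_vec n" unfolding u_def using Uc by auto
  have "(cadj U * (\<rho> * U)) $$ (i,i) = (\<Sum>k<n. cnj (U $$ (k,i)) * (\<rho> * U) $$ (k,i))"
    using cadj_mult_index[OF Uc _ i i, of "\<rho> * U"] rc Uc by auto
  also have "\<dots> = qform \<rho> u"
    unfolding qform_def u_def using rc Uc i
    by (intro sum.cong, auto)
  finally have "qform \<rho> u = D $$ (i,i)" unfolding DD by simp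
  also have "D $$ (i,i) = complex_of_real (d i)" unfolding D_def mat_diag_def using i by simp
  finally have qd: "qform \<rho> u = complex_of_real (d i)" .
  have "(cadj U * U) $$ (i,i) = (\<Sum>k<n. cnj (U $$ (k,i)) * U $$ (k,i))"
    using cadj_mult_index[OF Uc Uc i i] .
  hence s1: "(\<Sum>k<n. cnj (U $$ (k,i)) * U $$ (k,i)) = 1" unfolding UU using i by simp
  have "u \<noteq> 0\<^sub>v n"
  proof
    assume "u = 0\<^sub>v n"
    have "U $$ (k,i) = 0" if "k < n" for k
    proof -
      have "col U i $ k = U $$ (k,i)" using Uc that i by auto
      moreover have "col U i $ k = 0" using \<open>u = 0\<^sub>v n\<close> that unfolding u_def by simp
      ultimately show ?thesis by simp
    qed
    hence "(\<Sum>k<n. cnj (U $$ (k,i)) * U $$ (k,i)) = 0" by simp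
    thus False using s1 by simp
  qed
  hence "0 < Re (qform \<rho> u)" using pd uc rc unfolding pd_mat_def by auto
  thus ?thesis unfolding qd by simp
qed

lemma term_le:
  fixes a b w F c :: real
  assumes a: "a > 0" and b: "b > 0" and w: "w \<ge> 0" and F: "F > 0"
    and H: "a \<noteq> b \<Longrightarrow> F \<le> c * (1 + b / a)"
  shows "1/2/2 * ((a - b)^2 * w / ((a + b) / 2)) \<le> c / 2 * ((a - b)^2 * w / (a * F))"
proof (cases "a = b")
  case True thus ?thesis by simp
next
  case False
  have aF: "a * F \<le> c * (a + b)"
  proof -
    have "a * F \<le> a * (c * (1 + b / a))" using H[OF False] a by simp
    also have "a * (c * (1 + b / a)) = c * (a + b)" using a by (simp add: field_simps)
    finally show ?thesis .
  qed
  define q where "q = (a - b)^2 * w"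
  have q: "q \<ge> 0" unfolding q_def using w by simp
  have gen2: "B > 0 \<Longrightarrow> C > 0 \<Longrightarrow> (1/B \<le> cc/C) = (C \<le> cc*B)" for B C cc :: real
    by (simp add: field_simps)
  have e3: "c * (2 * (a + b)) = 2 * (c * (a + b))" by simp
  have B0: "2 * (a + b) > 0" using a b by simp
  have C0: "2 * (a * F) > 0" using a F by simp
  have "2 * (a * F) \<le> c * (2 * (a + b))" unfolding e3 using aF by simp
  hence "1 / (2 * (a + b)) \<le> c / (2 * (a * F))" by (rule gen2[OF B0 C0, THEN iffD2])
  hence "q * (1 / (2 * (a + b))) \<le> q * (c / (2 * (a * F)))" using q by (rule mult_left_mono)
  moreover have "1/2/2 * (q / ((a + b) / 2)) = q * (1 / (2 * (a + b)))" using a b by (simp add: field_simps)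
  moreover have "c / 2 * (q / (a * F)) = q * (c / (2 * (a * F)))" using a F by (simp add: field_simps)
  ultimately have "1/2/2 * (q / ((a + b) / 2)) \<le> c / 2 * (q / (a * F))" by (simp add: mult.commute)
  thus ?thesis unfolding q_def .
qed

lemma P_to_i:
  assumes f: "Fop f" and k: "k \<ge> 1"
    and P: "\<forall>t>0. t \<noteq> 1 \<longrightarrow> f t \<le> k * fzero f * (1 + t)"
    and fd: "faithful_density n \<rho>" and A: "A \<in> carrier_mat n n"
  shows "SLD_info \<rho> A \<le> k * f_info f \<rho> A"
proof -
  have rc: "\<rho> \<in> carrier_mat n n" and pd: "pd_mat \<rho>" using fd unfolding faithful_density_def by auto
  have h: "hermitian_mat \<rho>" using pd unfolding pd_mat_def by auto
  obtain U d where ed: "eig_decomp \<rho> = (U, d)" by (cases "eig_decomp \<rho>", auto)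
  have dpos: "\<And>i. i < n \<Longrightarrow> d i > 0" using eig_pos[OF rc pd ed] .
  define B where "B = cadj U * A * U"
  define TS where "TS = (\<lambda>i j. (d j - d i)^2 * (cmod (B $$ (j,i)))^2 / mean_f f_SLD (d j) (d i))"
  define TF where "TF = (\<lambda>i j. (d j - d i)^2 * (cmod (B $$ (j,i)))^2 / mean_f f (d j) (d i))"
  have S: "SLD_info \<rho> A = 1/2/2 * (\<Sum>i<n. \<Sum>j<n. TS i j)"
    unfolding SLD_info_def f_info_formula[OF rc h ed A] fzero_SLD TS_def B_def ..
  have FI: "k * f_info f \<rho> A = k * fzero f / 2 * (\<Sum>i<n. \<Sum>j<n. TF i j)"
    unfolding f_info_formula[OF rc h ed A] TF_def B_def by simp
  have tl: "1/2/2 * TS i j \<le> k * fzero f / 2 * TF i j" if i: "i < n" and j: "j < n" for i j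
  proof -
    have a: "d j > 0" and b: "d i > 0" using dpos i j by auto
    have "1/2/2 * ((d j - d i)^2 * (cmod (B $$ (j,i)))^2 / ((d j + d i) / 2))
       \<le> k * fzero f / 2 * ((d j - d i)^2 * (cmod (B $$ (j,i)))^2 / (d j * f (d i / d j)))"
    proof (rule term_le[OF a b _ fop_pos[OF f divide_pos_pos[OF b a]]])
      assume ne: "d j \<noteq> d i"
      have "d i / d j \<noteq> 1" using ne a by (simp add: divide_eq_1_iff)
      thus "f (d i / d j) \<le> k * fzero f * (1 + d i / d j)" using P b a by simp
    qed simp
    thus ?thesis unfolding TS_def TF_def mean_SLD[OF a] by (simp add: mean_f_def)
  qed
  have "1/2/2 * (\<Sum>i<n. \<Sum>j<n. TS i j) = (\<Sum>i<n. \<Sum>j<n. 1/2/2 * TS i j)"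
    by (simp add: sum_distrib_left)
  also have "\<dots> \<le> (\<Sum>i<n. \<Sum>j<n. k * fzero f / 2 * TF i j)"
    by (intro sum_mono, rule tl, auto)
  also have "\<dots> = k * fzero f / 2 * (\<Sum>i<n. \<Sum>j<n. TF i j)"
    by (simp add: sum_distrib_left)
  finally show ?thesis unfolding S FI .
qed


definition rho2 :: "real \<Rightarrow> real \<Rightarrow> complex mat" where
  "rho2 x y = mat_diag 2 (\<lambda>i. complex_of_real (if i = 0 then x else y))"

definition A2 :: "complex mat" where
  "A2 = mat 2 2 (\<lambda>(i,j). if i = j then 0 else 1)"

lemma less2: "(i::nat) < 2 \<longleftrightarrow> i = 0 \<or> i = 1" by auto

lemma sum2: "(\<Sum>i<(2::nat). h i) = h 0 + h 1" by (simp add: numeral_2_eq_2)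

lemma cz: "cnj z * complex_of_real g * z = complex_of_real (g * (cmod z)^2)"
proof -
  have "z * cnj z = complex_of_real ((cmod z)^2)" by (simp only: complex_norm_square)
  hence "cnj z * complex_of_real g * z = complex_of_real g * complex_of_real ((cmod z)^2)"
    by (simp add: ac_simps)
  thus ?thesis by simp
qed

lemma qform_diag: assumes v: "v \<in> carrier_vec n"
  shows "qform (mat_diag n g) v = (\<Sum>i<n. cnj (v $ i) * g i * v $ i)"
  unfolding qform_def
proof (rule sum.cong)
  fix i assume "i \<in> {..<n}"
  hence i: "i < n" by simp
  have "(mat_diag n g *\<^sub>v v) $ i = (\<Sum>j\<in>{0..<n}. (if i = j then g j else 0) * v $ j)"
    using i v by (simp add: mat_diag_def scalar_prod_def)
  also have "\<dots> = (\<Sum>j\<in>{0..<n}. if i = j then g j * v $ j else 0)"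
    by (rule sum.cong) auto
  also have "\<dots> = g i * v $ i" using i by simp
  finally show "cnj (v $ i) * (mat_diag n g *\<^sub>v v) $ i = cnj (v $ i) * g i * v $ i" by simp
qed (simp add: mat_diag_def)

lemma rho2_carrier: "rho2 x y \<in> carrier_mat 2 2" unfolding rho2_def by simp

lemma rho2_herm: "hermitian_mat (rho2 x y)"
  unfolding hermitian_mat_def rho2_def by (auto intro!: eq_matI simp: mat_diag_def)

lemma rho2_fd: assumes x: "x > 0" and y: "y > 0" and s: "x + y = 1"
  shows "faithful_density 2 (rho2 x y)"
  unfolding faithful_density_def
proof (intro conjI)
  show "rho2 x y \<in> carrier_mat 2 2" by (rule rho2_carrier)
  show "mtrace (rho2 x y) = 1" unfolding mtrace_def rho2_def
    using s by (simp add: sum2 mat_diag_def flip: of_real_add)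
  show "pd_mat (rho2 x y)" unfolding pd_mat_def
  proof (intro conjI ballI impI)
    show "hermitian_mat (rho2 x y)" by (rule rho2_herm)
    fix v :: "complex Matrix.vec" assume v: "v \<in> carrier_vec (dim_row (rho2 x y))" and v0: "v \<noteq> 0\<^sub>v (dim_row (rho2 x y))"
    have v2: "v \<in> carrier_vec 2" using v rho2_carrier[of x y] by simp
    have "qform (rho2 x y) v = complex_of_real (x * (cmod (v $ 0))^2) + complex_of_real (y * (cmod (v $ 1))^2)"
      unfolding rho2_def qform_diag[OF v2] sum2 cz[symmetric] by simp
    hence q: "Re (qform (rho2 x y) v) = x * (cmod (v $ 0))^2 + y * (cmod (v $ 1))^2" by simp
    have "v $ 0 \<noteq> 0 \<or> v $ 1 \<noteq> 0"
    proof (rule ccontr)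
      assume "\<not> (v $ 0 \<noteq> 0 \<or> v $ 1 \<noteq> 0)"
      hence "v = 0\<^sub>v 2" using v2 by (intro eq_vecI, auto simp: less2)
      thus False using v0 rho2_carrier[of x y] by simp
    qed
    thus "0 < Re (qform (rho2 x y) v)" unfolding q using x y
      by (auto intro: add_pos_nonneg add_nonneg_pos)
  qed
qed

lemma A2_carrier: "A2 \<in> carrier_mat 2 2" unfolding A2_def by simp
lemma A2_herm: "hermitian_mat A2" unfolding hermitian_mat_def A2_def by (auto intro!: eq_matI)

lemma two_eig:
  fixes x y :: real
  assumes xy: "x \<noteq> y" and ed: "eig_decomp (rho2 x y) = (U, d)"
  shows "(d 0 = x \<and> d 1 = y) \<or> (d 0 = y \<and> d 1 = x)"
proof -
  define g where "g = (\<lambda>i::nat. complex_of_real (if i = 0 then x else y))"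
  have rg: "rho2 x y = mat_diag 2 g" unfolding rho2_def g_def ..
  from eig_ok[OF rho2_carrier rho2_herm ed] have U: "unitary_mat 2 U"
    and r: "rho2 x y = U * mat_diag 2 (\<lambda>i. complex_of_real (d i)) * cadj U" by auto
  define D where "D = mat_diag 2 (\<lambda>i. complex_of_real (d i))"
  have Dc: "D \<in> carrier_mat 2 2" unfolding D_def by auto
  have Uc: "U \<in> carrier_mat 2 2" and UU: "cadj U * U = 1\<^sub>m 2" using U unfolding unitary_mat_def by auto
  have UU': "U * cadj U = 1\<^sub>m 2" using unitary_right[OF U] .
  have cUc: "cadj U \<in> carrier_mat 2 2" using cadj_carrier_mat[OF Uc] .
  have "rho2 x y * U = U * D * (cadj U * U)" unfolding r D_def[symmetric] using Uc cUc Dc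
    by (simp add: assoc_mult_mat[of _ 2 2 _ 2 _ 2])
  hence l2: "rho2 x y * U = U * D" unfolding UU using Dc Uc by simp
  have ent: "g j * U $$ (j,c) = U $$ (j,c) * complex_of_real (d c)" if "j < 2" "c < 2" for j c
  proof -
    have "g j * U $$ (j,c) = (rho2 x y * U) $$ (j,c)"
      unfolding rg using mat_diag_mult_left[OF Uc, of g] that by simp
    also have "\<dots> = (U * D) $$ (j,c)" using l2 by simp
    also have "(U * D) $$ (j,c) = U $$ (j,c) * complex_of_real (d c)"
      unfolding D_def using mat_diag_mult_right[OF Uc] that by simp
    finally show ?thesis .
  qed
  have dc: "d c = x \<or> d c = y" if c: "c < 2" for c
  proof -
    have "(cadj U * U) $$ (c,c) = (\<Sum>k<2. cnj (U $$ (k,c)) * U $$ (k,c))"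
      using cadj_mult_index[OF Uc Uc c c] .
    hence "(\<Sum>k<2. cnj (U $$ (k,c)) * U $$ (k,c)) = 1" unfolding UU using c by simp
    hence "U $$ (0,c) \<noteq> 0 \<or> U $$ (1,c) \<noteq> 0" unfolding sum2 by auto
    thus ?thesis
    proof
      assume "U $$ (0,c) \<noteq> 0"
      hence "g 0 = complex_of_real (d c)" using ent[of 0 c] c by (simp add: mult.commute)
      thus ?thesis unfolding g_def by simp
    next
      assume "U $$ (1,c) \<noteq> 0"
      hence "g 1 = complex_of_real (d c)" using ent[of 1 c] c by (simp add: mult.commute)
      thus ?thesis unfolding g_def by simp
    qed
  qed
  have dne: "d 0 \<noteq> d 1"
  proof
    assume eq: "d 0 = d 1"
    have diag: "rho2 x y $$ (i,i) = complex_of_real (d 0)" if i: "i < 2" for i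
    proof -
      have "rho2 x y $$ (i,i) = (\<Sum>k<2. U $$ (i,k) * complex_of_real (d k) * cnj (U $$ (i,k)))"
        unfolding r using udu_index[OF Uc i i] .
      also have "\<dots> = complex_of_real (d 0) * (\<Sum>k<2. U $$ (i,k) * cnj (U $$ (i,k)))"
        unfolding sum2 using eq by (simp add: algebra_simps)
      also have "(\<Sum>k<2. U $$ (i,k) * cnj (U $$ (i,k))) = (U * cadj U) $$ (i,i)"
        using Uc i by (simp add: scalar_prod_def atLeast0LessThan)
      finally show ?thesis unfolding UU' using i by simp
    qed
    have "complex_of_real x = complex_of_real y"
      using diag[of 0] diag[of 1] unfolding rho2_def mat_diag_def by simp
    thus False using xy by simp
  qed
  show ?thesis using dc[of 0] dc[of 1] dne xy by auto
qed

lemma Boff: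
  fixes x y :: real
  assumes xy: "x \<noteq> y" and ed: "eig_decomp (rho2 x y) = (U, d)"
  shows "(cmod ((cadj U * A2 * U) $$ (1,0)))^2 + (cmod ((cadj U * A2 * U) $$ (0,1)))^2 > 0"
proof (rule ccontr)
  define B where "B = cadj U * A2 * U"
  define X where "X = \<i> \<cdot>\<^sub>m (rho2 x y * A2 - A2 * rho2 x y)"
  assume "\<not> ?thesis"
  hence "(cmod (B $$ (1,0)))^2 + (cmod (B $$ (0,1)))^2 \<le> 0" unfolding B_def by simp
  hence B10: "B $$ (1,0) = 0" and B01: "B $$ (0,1) = 0"
    by (smt (verit) zero_le_power2 norm_eq_zero power_eq_0_iff)+
  from eig_ok[OF rho2_carrier rho2_herm ed] have U: "unitary_mat 2 U" by auto
  have Uc: "U \<in> carrier_mat 2 2" using U unfolding unitary_mat_def by auto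
  have UU': "U * cadj U = 1\<^sub>m 2" using unitary_right[OF U] .
  have cUc: "cadj U \<in> carrier_mat 2 2" using cadj_carrier_mat[OF Uc] .
  have Xc: "X \<in> carrier_mat 2 2" unfolding X_def using rho2_carrier[of x y] A2_carrier by auto
  have Y0: "cadj U * X * U = 0\<^sub>m 2 2"
  proof (rule eq_matI)
    fix k i assume "k < dim_row (0\<^sub>m 2 2 :: complex mat)" "i < dim_col (0\<^sub>m 2 2 :: complex mat)"
    hence k: "k < 2" and i: "i < 2" by auto
    have "(cadj U * X * U) $$ (k,i) = \<i> * (complex_of_real (d k) - complex_of_real (d i)) * B $$ (k,i)"
      unfolding X_def B_def by (rule Y_entry[OF rho2_carrier rho2_herm ed A2_carrier k i])
    also have "\<dots> = 0" using k i B10 B01 by (auto simp: less2)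
    finally show "(cadj U * X * U) $$ (k,i) = 0\<^sub>m 2 2 $$ (k,i)" using k i by simp
  qed (use cUc Xc Uc in auto)
  have "X = (U * cadj U) * X * (U * cadj U)" unfolding UU' using Xc by simp
  also have "\<dots> = U * (cadj U * X * U) * cadj U" using Uc cUc Xc
    by (simp add: assoc_mult_mat[of _ 2 2 _ 2 _ 2])
  also have "\<dots> = 0\<^sub>m 2 2" unfolding Y0 using Uc cUc by simp
  finally have X0: "X $$ (0,1) = 0" by simp
  define g where "g = (\<lambda>i::nat. complex_of_real (if i = 0 then x else y))"
  have rg: "rho2 x y = mat_diag 2 g" unfolding rho2_def g_def ..
  have e1: "(rho2 x y * A2) $$ (0,1) = complex_of_real x"
    unfolding rg using mat_diag_mult_left[OF A2_carrier, of g] by (simp add: g_def A2_def)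
  have e2: "(A2 * rho2 x y) $$ (0,1) = complex_of_real y"
    unfolding rg using mat_diag_mult_right[OF A2_carrier, of g] by (simp add: g_def A2_def)
  have "X $$ (0,1) = \<i> * (complex_of_real x - complex_of_real y)"
    unfolding X_def using e1 e2 rho2_carrier[of x y] A2_carrier by simp
  hence "complex_of_real x = complex_of_real y" using X0 by simp
  thus False using xy by simp
qed

lemma conc:
  fixes W x y F c :: real
  assumes W: "W > 0" and x: "x > 0" and y: "y > 0" and F: "F > 0"
    and H: "1/2/2 * (W / ((x + y) / 2)) \<le> c / 2 * (W / (x * F))"
  shows "F \<le> c * (1 + y / x)"
proof -
  have e1: "1/2/2 * (W / ((x + y) / 2)) = W * (1 / (2 * (x + y)))" using x y by (simp add: field_simps)
  have e2: "c / 2 * (W / (x * F)) = W * (c / (2 * (x * F)))" using x F by (simp add: field_simps)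
  have "W * (1 / (2 * (x + y))) \<le> W * (c / (2 * (x * F)))" using H unfolding e1 e2 .
  hence "1 / (2 * (x + y)) \<le> c / (2 * (x * F))" by (rule mult_le_cancel_left_pos[OF W, THEN iffD1])
  moreover have gen2: "B > 0 \<Longrightarrow> C > 0 \<Longrightarrow> (1/B \<le> cc/C) = (C \<le> cc*B)" for B C cc :: real
    by (simp add: field_simps)
  moreover have B0: "2 * (x + y) > 0" and C0: "2 * (x * F) > 0" using x y F by auto
  ultimately have "2 * (x * F) \<le> c * (2 * (x + y))"
    using gen2[OF B0 C0] by blast
  moreover have "c * (2 * (x + y)) = 2 * (c * (x + y))" by simp
  ultimately have "x * F \<le> c * (x + y)" by linarith
  moreover have e4: "x * (c * (1 + y / x)) = c * (x + y)" using x by (simp add: field_simps)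
  ultimately have "x * F \<le> x * (c * (1 + y / x))" by (simp only: e4)
  thus ?thesis using x by simp
qed

lemma sum22: "(\<Sum>i<(2::nat). \<Sum>j<(2::nat). h i j) = h 0 0 + h 0 1 + h 1 0 + h 1 1"
  by (simp add: sum2 add.assoc)

lemma pair_sum: assumes "m' = m"
  shows "(b - a)^2 * p / m' + (a - b)^2 * q / m = (a - b)^2 * (p + q) / (m::real)"
  using assms by (simp add: power2_commute add_divide_distrib distrib_left)

lemma i_to_P:
  assumes f: "Fop f" and k: "k \<ge> 1"
    and I: "\<forall>n \<rho> A. faithful_density n \<rho> \<longrightarrow> A \<in> carrier_mat n n \<longrightarrow> hermitian_mat A \<longrightarrow>
             SLD_info \<rho> A \<le> k * f_info f \<rho> A"
  shows "\<forall>t>0. t \<noteq> 1 \<longrightarrow> f t \<le> k * fzero f * (1 + t)"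
proof (intro allI impI)
  fix t :: real assume t: "t > 0" "t \<noteq> 1"
  define x where "x = 1 / (1 + t)"
  define y where "y = t / (1 + t)"
  have x: "x > 0" and y: "y > 0" unfolding x_def y_def using t by auto
  have s: "x + y = 1" unfolding x_def y_def using t by (simp add: field_simps)
  have yx: "y / x = t" unfolding x_def y_def using t by (simp add: field_simps)
  have xy: "x \<noteq> y" using t yx x by auto
  define \<rho> where "\<rho> = rho2 x y"
  have fd: "faithful_density 2 \<rho>" unfolding \<rho>_def using rho2_fd[OF x y s] .
  have le: "SLD_info \<rho> A2 \<le> k * f_info f \<rho> A2" using I fd A2_carrier A2_herm by blast
  have rc: "\<rho> \<in> carrier_mat 2 2" and pd: "pd_mat \<rho>" using fd unfolding faithful_density_def by auto
  have h: "hermitian_mat \<rho>" using pd unfolding pd_mat_def by auto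
  obtain U d where ed: "eig_decomp \<rho> = (U, d)" by (cases "eig_decomp \<rho>", auto)
  have d0: "d 0 > 0" and d1: "d 1 > 0" using eig_pos[OF rc pd ed] by auto
  define B where "B = cadj U * A2 * U"
  define Q where "Q = (cmod (B $$ (1,0)))^2 + (cmod (B $$ (0,1)))^2"
  have Q: "Q > 0" unfolding Q_def B_def using Boff[OF xy ed[unfolded \<rho>_def]] .
  have te: "(d 0 = x \<and> d 1 = y) \<or> (d 0 = y \<and> d 1 = x)" using two_eig[OF xy ed[unfolded \<rho>_def]] .
  define W where "W = (d 0 - d 1)^2 * Q"
  have W: "W > 0" unfolding W_def using Q te xy by auto
  have S: "SLD_info \<rho> A2 = 1/2/2 * (W / mean_f f_SLD (d 0) (d 1))"
  proof -
    have "SLD_info \<rho> A2 = 1/2/2 * (\<Sum>i<2. \<Sum>j<2. (d j - d i)^2 * (cmod (B $$ (j,i)))^2 / mean_f f_SLD (d j) (d i))"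
      unfolding SLD_info_def f_info_formula[OF rc h ed A2_carrier] fzero_SLD B_def ..
    also have "(\<Sum>i<2. \<Sum>j<2. (d j - d i)^2 * (cmod (B $$ (j,i)))^2 / mean_f f_SLD (d j) (d i))
       = (d 1 - d 0)^2 * (cmod (B $$ (1,0)))^2 / mean_f f_SLD (d 1) (d 0) +
         (d 0 - d 1)^2 * (cmod (B $$ (0,1)))^2 / mean_f f_SLD (d 0) (d 1)"
      unfolding sum22 by simp
    also have "\<dots> = W / mean_f f_SLD (d 0) (d 1)" unfolding W_def Q_def
      by (rule pair_sum, simp only: mean_SLD[OF d0] mean_SLD[OF d1] add.commute)
    finally show ?thesis .
  qed
  have F: "k * f_info f \<rho> A2 = k * fzero f / 2 * (W / mean_f f (d 0) (d 1))"
  proof -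
    have "k * f_info f \<rho> A2 = k * fzero f / 2 * (\<Sum>i<2. \<Sum>j<2. (d j - d i)^2 * (cmod (B $$ (j,i)))^2 / mean_f f (d j) (d i))"
      unfolding f_info_formula[OF rc h ed A2_carrier] B_def by simp
    also have "(\<Sum>i<2. \<Sum>j<2. (d j - d i)^2 * (cmod (B $$ (j,i)))^2 / mean_f f (d j) (d i))
       = (d 1 - d 0)^2 * (cmod (B $$ (1,0)))^2 / mean_f f (d 1) (d 0) +
         (d 0 - d 1)^2 * (cmod (B $$ (0,1)))^2 / mean_f f (d 0) (d 1)"
      unfolding sum22 by simp
    also have "\<dots> = W / mean_f f (d 0) (d 1)" unfolding W_def Q_def
      by (rule pair_sum, rule mean_sym[OF f d1 d0])
    finally show ?thesis .
  qed
  have msum: "mean_f f_SLD (d 0) (d 1) = (x + y) / 2" using te d0 by (auto simp: mean_SLD)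
  have mf: "mean_f f (d 0) (d 1) = x * f (y / x)"
    using te mean_sym[OF f x y] unfolding mean_f_def by auto
  have "1/2/2 * (W / ((x + y) / 2)) \<le> (k * fzero f) / 2 * (W / (x * f (y / x)))"
    using le unfolding S F msum mf by simp
  from conc[OF W x y fop_pos[OF f divide_pos_pos[OF y x]] this]
  show "f t \<le> k * fzero f * (1 + t)" unfolding yx .
qed


theorem mainTheorem6:
  fixes f :: "real \<Rightarrow> real" and k :: real
  assumes "Fop_r f" and "k \<ge> 1"
  shows "((\<forall>n \<rho> A. faithful_density n \<rho> \<longrightarrow> A \<in> carrier_mat n n \<longrightarrow> hermitian_mat A \<longrightarrow>
             SLD_info \<rho> A \<le> k * f_info f \<rho> A)
          \<longleftrightarrow> (\<forall>x>0. \<forall>y>0. mean_f (ftilde f) x y \<le>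
                  (1 - 1 / k) * ((x + y) / 2) + (1 / k) * (2 * x * y / (x + y))))
       \<and> ((\<forall>x>0. \<forall>y>0. mean_f (ftilde f) x y \<le>
                  (1 - 1 / k) * ((x + y) / 2) + (1 / k) * (2 * x * y / (x + y)))
          \<longleftrightarrow> (\<forall>x>0. f x \<le> 2 * k * fzero f * ((1 + x) / 2)))"
proof -
  have f: "Fop f" using assms(1) unfolding Fop_r_def by auto
  have k: "k \<ge> 1" by (rule assms(2))
  have e1: "(\<forall>n \<rho> A. faithful_density n \<rho> \<longrightarrow> A \<in> carrier_mat n n \<longrightarrow> hermitian_mat A \<longrightarrow>
             SLD_info \<rho> A \<le> k * f_info f \<rho> A)
        \<longleftrightarrow> (\<forall>t>0. t \<noteq> 1 \<longrightarrow> f t \<le> k * fzero f * (1 + t))"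
  proof
    assume "\<forall>n \<rho> A. faithful_density n \<rho> \<longrightarrow> A \<in> carrier_mat n n \<longrightarrow> hermitian_mat A \<longrightarrow>
             SLD_info \<rho> A \<le> k * f_info f \<rho> A"
    thus "\<forall>t>0. t \<noteq> 1 \<longrightarrow> f t \<le> k * fzero f * (1 + t)" by (rule i_to_P[OF f k])
  next
    assume P: "\<forall>t>0. t \<noteq> 1 \<longrightarrow> f t \<le> k * fzero f * (1 + t)"
    show "\<forall>n \<rho> A. faithful_density n \<rho> \<longrightarrow> A \<in> carrier_mat n n \<longrightarrow> hermitian_mat A \<longrightarrow>
             SLD_info \<rho> A \<le> k * f_info f \<rho> A"
      using P_to_i[OF f k P] by blast
  qed
  show ?thesis using e1 ii_iff[OF f k] iii_iff[OF f k] by blast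
qed

end
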